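(* Let $n,m\in\mathbb{N}$, $k\in\mathbb{N}$, $p\in\mathbb{N}\cup\{0\}$, and let $F: V(L_n)\to V(D_m)$ satisfy $$4^{p}d_{L_n}(u,v)\le d_{D_m}(Fu,Fv)\le 4^{k}\cdot 4^{p}d_{L_n}(u,v)\quad\text{for all } u,v\in V(L_n).$$ Let $h\in\{1,\dots,n\}$ satisfy $\frac{4^h}{3}-1-4^k\ge 4^{h-1}$. Let $C_{4^h}$ be an isometric cycle of length $4^h$ in $L_n$, and let $FC_{4^h}$ be the closed walk in $D_m$ obtained by joining, for each edge $uv$ of $C_{4^h}$, the points $Fu$ and $Fv$ by a chosen shortest path in $D_m$. Then the subgraph of $D_m$ spanned by $FC_{4^h}$ contains a cycle whose length is between $4^{p+h-1}$ and $4^{p+h+k}$.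
   Context: All graphs are unweighted (each edge has length $1$) and carry the shortest-path metric. Diamond graphs: $D_0$ is a single edge; $D_m$ is obtained from $D_{m-1}$ by replacing every edge $uv$ by a quadrilateral $u,a,v,b$ with edges $ua,av,vb,bu$. Laakso graphs: $L_0$ is a single edge; $L_1$ is the graph with vertices $x_1,\dots,x_6$ and edges $x_1x_2,x_2x_3,x_2x_4,x_3x_5,x_4x_5,x_5x_6$; $L_n$ is obtained from $L_{n-1}$ by replacing each edge $uv$ by a copy of $L_1$ with $u,v$ identified with $x_1,x_6$. A cycle in $L_n$ is isometric if the distance in $L_n$ between any two of its vertices equals their distance along the cycle. *)

theory Defs
  imports Main Complex_Main
begin

text \<open>A vertex is one of the two original endpoints, or the i-th new vertex
  inserted when the (oriented) edge (u,v) of the previous level is replaced.\<close>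
datatype vert = VS | VT | Sub vert vert nat

text \<open>Local labels of a gadget: source, target, inner vertices.\<close>
datatype lab = Src | Tgt | Inn nat

fun inst :: "vert \<Rightarrow> vert \<Rightarrow> lab \<Rightarrow> vert" where
  "inst u v Src = u"
| "inst u v Tgt = v"
| "inst u v (Inn i) = Sub u v i"

text \<open>Replace every (oriented) edge (u,v) of E by a copy of the gadget G,
  identifying Src with u and Tgt with v.\<close>
definition refine :: "(lab \<times> lab) set \<Rightarrow> (vert \<times> vert) set \<Rightarrow> (vert \<times> vert) set" where
  "refine G E = (\<Union>(u,v)\<in>E. (\<lambda>(a,b). (inst u v a, inst u v b)) ` G)"

fun iter_graph :: "(lab \<times> lab) set \<Rightarrow> nat \<Rightarrow> (vert \<times> vert) set" where
  "iter_graph G 0 = {(VS, VT)}"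
| "iter_graph G (Suc n) = refine G (iter_graph G n)"

text \<open>Quadrilateral u,a,v,b with edges ua, av, vb, bu.\<close>
definition diamond_gadget :: "(lab \<times> lab) set" where
  "diamond_gadget = {(Src, Inn 0), (Inn 0, Tgt), (Src, Inn 1), (Inn 1, Tgt)}"

text \<open>L_1: x1 = Src, x2 = Inn 0, x3 = Inn 1, x4 = Inn 2, x5 = Inn 3, x6 = Tgt.\<close>
definition laakso_gadget :: "(lab \<times> lab) set" where
  "laakso_gadget = {(Src, Inn 0), (Inn 0, Inn 1), (Inn 0, Inn 2),
                    (Inn 1, Inn 3), (Inn 2, Inn 3), (Inn 3, Tgt)}"

definition diamond :: "nat \<Rightarrow> (vert \<times> vert) set" where
  "diamond m = iter_graph diamond_gadget m"

definition laakso :: "nat \<Rightarrow> (vert \<times> vert) set" where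
  "laakso n = iter_graph laakso_gadget n"

definition verts :: "('a \<times> 'a) set \<Rightarrow> 'a set" where
  "verts E = Field E"

definition adj :: "('a \<times> 'a) set \<Rightarrow> 'a \<Rightarrow> 'a \<Rightarrow> bool" where
  "adj E x y \<longleftrightarrow> (x, y) \<in> E \<or> (y, x) \<in> E"

definition walk :: "('a \<times> 'a) set \<Rightarrow> 'a list \<Rightarrow> bool" where
  "walk E xs \<longleftrightarrow> xs \<noteq> [] \<and> (\<forall>i. Suc i < length xs \<longrightarrow> adj E (xs ! i) (xs ! Suc i))"

definition gdist :: "('a \<times> 'a) set \<Rightarrow> 'a \<Rightarrow> 'a \<Rightarrow> nat" where
  "gdist E x y = (LEAST n. \<exists>xs. walk E xs \<and> hd xs = x \<and> last xs = y \<and> length xs = Suc n)"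

text \<open>A cycle, given by its list of (distinct) vertices in cyclic order;
  its length is the number of vertices (= number of edges).\<close>
definition cycle_in :: "('a \<times> 'a) set \<Rightarrow> 'a list \<Rightarrow> bool" where
  "cycle_in E cs \<longleftrightarrow> length cs \<ge> 3 \<and> distinct cs \<and>
     (\<forall>i < length cs. adj E (cs ! i) (cs ! ((i + 1) mod length cs)))"

definition cyc_dist :: "nat \<Rightarrow> nat \<Rightarrow> nat \<Rightarrow> nat" where
  "cyc_dist l i j = (let d = (if i \<le> j then j - i else i - j) in min d (l - d))"

definition isometric_cycle :: "('a \<times> 'a) set \<Rightarrow> 'a list \<Rightarrow> bool" where
  "isometric_cycle E cs \<longleftrightarrow> cycle_in E cs \<and>
     (\<forall>i < length cs. \<forall>j < length cs. gdist E (cs ! i) (cs ! j) = cyc_dist (length cs) i j)"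

definition walks_edges :: "nat \<Rightarrow> (nat \<Rightarrow> 'a list) \<Rightarrow> ('a \<times> 'a) set" where
  "walks_edges l P = {(P i ! j, P i ! Suc j) | i j. i < l \<and> Suc j < length (P i)}"

end

theory Submission
  imports Defs
begin


lemma walk_iff: "walk E xs \<longleftrightarrow> xs \<noteq> [] \<and> successively (adj E) xs"
  by (simp add: walk_def successively_conv_nth)

lemma adj_sym: "adj E x y = adj E y x"
  by (auto simp: adj_def)

lemma walk_rev: "walk E xs \<Longrightarrow> walk E (rev xs)"
  unfolding walk_iff by (auto simp: adj_sym elim: successively_mono)

lemma walk_app: "walk E xs \<Longrightarrow> walk E ys \<Longrightarrow> last xs = hd ys \<Longrightarrow> walk E (xs @ tl ys)"
  unfolding walk_iff
  by (cases ys; cases "tl ys") (auto simp: successively_append_iff)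

lemma walk_mono: "E \<subseteq> E' \<Longrightarrow> walk E xs \<Longrightarrow> walk E' xs"
  unfolding walk_def adj_def by blast

lemma walk_take: "walk E xs \<Longrightarrow> 0 < k \<Longrightarrow> walk E (take k xs)"
  unfolding walk_def by auto

lemma walk_drop: "walk E xs \<Longrightarrow> k < length xs \<Longrightarrow> walk E (drop k xs)"
  unfolding walk_def by auto

definition dw :: "('a \<times> 'a) set \<Rightarrow> 'a \<Rightarrow> 'a \<Rightarrow> nat \<Rightarrow> bool" where
  "dw E x y n \<longleftrightarrow> (\<exists>xs. walk E xs \<and> hd xs = x \<and> last xs = y \<and> length xs \<le> Suc n)"

lemma dw_refl: "dw E x x 0"
  unfolding dw_def by (rule exI[of _ "[x]"]) (simp add: walk_def)

lemma dw_sym: "dw E x y n \<Longrightarrow> dw E y x n"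
  unfolding dw_def
  by (metis hd_rev last_rev length_rev walk_rev walk_def)

lemma dw_trans: "dw E x y a \<Longrightarrow> dw E y z b \<Longrightarrow> dw E x z (a + b)"
proof -
  assume "dw E x y a" "dw E y z b"
  then obtain xs ys where xs: "walk E xs" "hd xs = x" "last xs = y" "length xs \<le> Suc a"
    and ys: "walk E ys" "hd ys = y" "last ys = z" "length ys \<le> Suc b"
    unfolding dw_def by blast
  have ne: "xs \<noteq> []" "ys \<noteq> []" using xs ys by (auto simp: walk_def)
  have "walk E (xs @ tl ys)" using walk_app xs ys by metis
  moreover have "hd (xs @ tl ys) = x" using ne xs by simp
  moreover have "last (xs @ tl ys) = z"
    using ne xs ys by (cases ys; cases "tl ys") auto
  moreover have "length (xs @ tl ys) \<le> Suc (a + b)" using xs ys ne by auto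
  ultimately show ?thesis unfolding dw_def by blast
qed

lemma dw_mono: "dw E x y a \<Longrightarrow> a \<le> b \<Longrightarrow> dw E x y b"
  unfolding dw_def by fastforce

lemma dw_monoE: "dw E x y a \<Longrightarrow> E \<subseteq> E' \<Longrightarrow> dw E' x y a"
  unfolding dw_def using walk_mono by blast

lemma gdist_le_walk: "walk E xs \<Longrightarrow> gdist E (hd xs) (last xs) \<le> length xs - 1"
  unfolding gdist_def
  by (rule Least_le) (rule exI[of _ xs], auto simp: walk_def)

lemma dw_gdist: "dw E x y n \<Longrightarrow> gdist E x y \<le> n"
  unfolding dw_def using gdist_le_walk by fastforce

lemma shortest_ex:
  assumes "walk E xs"
  shows "\<exists>ys. walk E ys \<and> hd ys = hd xs \<and> last ys = last xs \<and>
     length ys = Suc (gdist E (hd xs) (last xs))"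
proof -
  have "\<exists>n ys. walk E ys \<and> hd ys = hd xs \<and> last ys = last xs \<and> length ys = Suc n"
    using assms by (intro exI[of _ "length xs - 1"] exI[of _ xs]) (auto simp: walk_def)
  then show ?thesis unfolding gdist_def by (rule LeastI_ex)
qed

lemma shortest_distinct:
  assumes w: "walk E xs" and l: "length xs = Suc (gdist E (hd xs) (last xs))"
  shows "distinct xs"
proof (rule ccontr)
  assume "\<not> distinct xs"
  then obtain a b where ab: "a < b" "b < length xs" "xs ! a = xs ! b"
    by (metis distinct_conv_nth linorder_neqE_nat)
  define ys where "ys = take (Suc a) xs @ tl (drop b xs)"
  have w1: "walk E (take (Suc a) xs)" using walk_take w by blast
  have w2: "walk E (drop b xs)" using walk_drop w ab by blast
  have "last (take (Suc a) xs) = hd (drop b xs)"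
    using ab by (subst last_conv_nth) (auto simp: min_def hd_drop_conv_nth)
  hence wy: "walk E ys" unfolding ys_def using walk_app w1 w2 by blast
  have hy: "hd ys = hd xs" unfolding ys_def using ab by (cases xs) auto
  have ly: "last ys = last xs"
  proof (cases "Suc b = length xs")
    case True
    then have "tl (drop b xs) = []" by (simp add: tl_drop)
    have "last (take (Suc a) xs) = xs ! a"
      using ab by (subst last_conv_nth) (auto simp: min_def)
    moreover have "last xs = xs ! b" using True ab
      by (metis diff_Suc_1 last_conv_nth list.size(3) not_less_zero)
    ultimately show ?thesis unfolding ys_def using ab \<open>tl (drop b xs) = []\<close> by simp
  next
    case False
    then have "tl (drop b xs) \<noteq> []" using ab by (simp add: tl_drop)
    moreover have "last (tl (drop b xs)) = last xs"
      using calculation ab by (simp add: last_tl)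
    ultimately show ?thesis unfolding ys_def by simp
  qed
  have "length ys < length xs" unfolding ys_def using ab by auto
  moreover have "gdist E (hd xs) (last xs) \<le> length ys - 1"
    using gdist_le_walk[OF wy] hy ly by simp
  moreover have "length ys > 0" using wy by (simp add: walk_def)
  ultimately show False using l by linarith
qed

lemma cycle_from_closed:
  assumes "walk E (cs @ [hd cs])" "distinct cs" "length cs \<ge> 3"
  shows "cycle_in E cs"
  unfolding cycle_in_def
proof (intro conjI allI impI assms(2,3))
  fix i assume i: "i < length cs"
  have a: "adj E ((cs @ [hd cs]) ! i) ((cs @ [hd cs]) ! Suc i)"
    using assms(1) i unfolding walk_def by simp
  show "adj E (cs ! i) (cs ! ((i + 1) mod length cs))"
  proof (cases "Suc i < length cs")
    case True then show ?thesis using a i by (simp add: nth_append)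
  next
    case False
    then have "Suc i = length cs" using i by simp
    moreover have "cs \<noteq> []" using i by auto
    ultimately show ?thesis using a i
      by (simp add: nth_append hd_conv_nth)
  qed
qed

lemma walk_seg:
  assumes "walk E xs" "i \<le> j" "j < length xs"
  shows "walk E (take (Suc (j - i)) (drop i xs))" "hd (take (Suc (j - i)) (drop i xs)) = xs ! i"
    "last (take (Suc (j - i)) (drop i xs)) = xs ! j" "length (take (Suc (j - i)) (drop i xs)) = Suc (j - i)"
proof -
  show "walk E (take (Suc (j - i)) (drop i xs))"
    using assms by (intro walk_take walk_drop) auto
  show "hd (take (Suc (j - i)) (drop i xs)) = xs ! i"
    using assms by (simp add: hd_drop_conv_nth)
  show "last (take (Suc (j - i)) (drop i xs)) = xs ! j"
  proof -
    have "length xs - i \<le> Suc (j - i) \<Longrightarrow> length xs - Suc 0 = j" using assms by linarith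
    then show ?thesis using assms by (subst last_conv_nth) (auto simp: min_def)
  qed
  show "length (take (Suc (j - i)) (drop i xs)) = Suc (j - i)"
    using assms by auto
qed

lemma dw_seg: "walk E xs \<Longrightarrow> i \<le> j \<Longrightarrow> j < length xs \<Longrightarrow> dw E (xs ! i) (xs ! j) (j - i)"
  unfolding dw_def using walk_seg by (metis order_refl)

lemma walk_adj_mono: "(\<And>x y. adj E x y \<Longrightarrow> adj E' x y) \<Longrightarrow> walk E xs \<Longrightarrow> walk E' xs"
  unfolding walk_def by blast

lemma dw_adj_mono: "(\<And>x y. adj E x y \<Longrightarrow> adj E' x y) \<Longrightarrow> dw E x y n \<Longrightarrow> dw E' x y n"
  unfolding dw_def using walk_adj_mono by blast

lemma walk_set_Field:
  assumes "walk E xs" "2 \<le> length xs" shows "set xs \<subseteq> Field E"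
proof
  fix x assume "x \<in> set xs"
  then obtain t where t: "t < length xs" "xs ! t = x" by (auto simp: in_set_conv_nth)
  show "x \<in> Field E"
  proof (cases "Suc t < length xs")
    case True
    then have "adj E (xs ! t) (xs ! Suc t)" using assms unfolding walk_def by blast
    then show ?thesis using t by (auto simp: adj_def Field_def)
  next
    case False
    then obtain t' where "t = Suc t'" using assms t by (cases t) auto
    then have "adj E (xs ! t') (xs ! t)" using assms t unfolding walk_def by blast
    then show ?thesis using t by (auto simp: adj_def Field_def)
  qed
qed

definition we :: "nat set \<Rightarrow> (nat \<Rightarrow> 'a list) \<Rightarrow> ('a \<times> 'a) set" where
  "we I P = {(P i ! j, P i ! Suc j) | i j. i \<in> I \<and> Suc j < length (P i)}"

lemma walks_edges_we: "walks_edges l P = we {..<l} P"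
  unfolding walks_edges_def we_def by auto

lemma we_mono: "I \<subseteq> J \<Longrightarrow> we I P \<subseteq> we J P"
  unfolding we_def by blast

lemma walk_P_we: "i \<in> I \<Longrightarrow> P i \<noteq> [] \<Longrightarrow> walk (we I P) (P i)"
  unfolding walk_def adj_def we_def by blast

lemma Field_we: "Field (we I P) \<subseteq> (\<Union>i\<in>I. set (P i))"
  unfolding we_def Field_def by (auto intro!: nth_mem)

lemma join_cycle:
  assumes wA: "walk E A" and wS: "walk E S" and dA: "distinct A" and dS: "distinct S"
    and lA: "3 \<le> length A" and lS: "2 \<le> length S"
    and e1: "last A = hd S" and e2: "last S = hd A"
    and disj: "\<forall>x \<in> set A. x \<in> set S \<longrightarrow> x = hd A \<or> x = last A"
  shows "cycle_in E (A @ butlast (tl S))"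
proof (rule cycle_from_closed)
  have tS: "tl S \<noteq> []" using lS by (cases S) auto
  have A0: "A \<noteq> []" using lA by auto
  have eq: "butlast (tl S) @ [last (tl S)] = tl S" using tS by simp
  have lt: "last (tl S) = last S" using tS by (simp add: last_tl)
  have "(A @ butlast (tl S)) @ [hd (A @ butlast (tl S))] = A @ tl S"
    using eq lt e2 A0 by (metis append_assoc hd_append2)
  then show "walk E ((A @ butlast (tl S)) @ [hd (A @ butlast (tl S))])"
    using walk_app[OF wA wS e1] by simp
  have S0: "S = hd S # tl S" using lS by (cases S) auto
  have dtl: "distinct (tl S)" using dS by (simp add: distinct_tl)
  have hdn: "hd S \<notin> set (tl S)" using dS S0 by (metis distinct.simps(2))
  have "distinct (butlast (tl S) @ [last S])" using dtl eq lt by simp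
  then have lastn: "last S \<notin> set (butlast (tl S))" by simp
  have sub: "set (butlast (tl S)) \<subseteq> set S" using S0 in_set_butlastD
    by (metis set_subset_Cons subset_code(1))
  have "set A \<inter> set (butlast (tl S)) = {}"
  proof (rule ccontr)
    assume "set A \<inter> set (butlast (tl S)) \<noteq> {}"
    then obtain x where x: "x \<in> set A" "x \<in> set (butlast (tl S))" by blast
    then have "x = hd A \<or> x = last A" using disj sub by blast
    then show False using x hdn lastn e1 e2 by (metis in_set_butlastD)
  qed
  then show "distinct (A @ butlast (tl S))" using dA dtl by (simp add: distinct_butlast)
  show "3 \<le> length (A @ butlast (tl S))" using lA by simp
qed

lemma nat_mult_le_plus1: "(1::nat) \<le> D \<Longrightarrow> D * x \<le> D * y + 1 \<Longrightarrow> x \<le> y + 1"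
proof (rule ccontr)
  assume a: "1 \<le> D" "D * x \<le> D * y + 1" "\<not> x \<le> y + 1"
  then have "y + 2 \<le> x" by simp
  then have "D * (y + 2) \<le> D * x" by (rule mult_le_mono2)
  then show False using a by (simp add: algebra_simps)
qed



lemma cd_formula: "cyc_dist N i j = min (if i \<le> j then j - i else i - j) (N - (if i \<le> j then j - i else i - j))"
  by (simp add: cyc_dist_def Let_def)

theorem claim2p5:
  fixes n m k p h :: nat and F :: "vert \<Rightarrow> vert"
    and cs :: "vert list" and P :: "nat \<Rightarrow> vert list"
  assumes "n \<ge> 1" and "m \<ge> 1" and "k \<ge> 1"
    and F_maps: "F ` verts (laakso n) \<subseteq> verts (diamond m)"
    and F_lower: "\<forall>u \<in> verts (laakso n). \<forall>v \<in> verts (laakso n).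
        4 ^ p * gdist (laakso n) u v \<le> gdist (diamond m) (F u) (F v)"
    and F_upper: "\<forall>u \<in> verts (laakso n). \<forall>v \<in> verts (laakso n).
        gdist (diamond m) (F u) (F v) \<le> 4 ^ k * 4 ^ p * gdist (laakso n) u v"
    and h_range: "1 \<le> h" "h \<le> n"
    and h_cond: "(4::real) ^ h / 3 - 1 - 4 ^ k \<ge> 4 ^ (h - 1)"
    and C_iso: "isometric_cycle (laakso n) cs" and C_len: "length cs = 4 ^ h"
    and P_paths: "\<forall>i < length cs. walk (diamond m) (P i) \<and>
        hd (P i) = F (cs ! i) \<and> last (P i) = F (cs ! ((i + 1) mod length cs)) \<and>
        length (P i) = Suc (gdist (diamond m) (F (cs ! i)) (F (cs ! ((i + 1) mod length cs))))"
  shows "\<exists>ys. cycle_in (walks_edges (length cs) P) ys \<and>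
           4 ^ (p + h - 1) \<le> length ys \<and> length ys \<le> 4 ^ (p + h + k)"
proof -
  define N where "N = length cs"
  define D where "D = (4::nat) ^ p"
  define K where "K = (4::nat) ^ k"
  define N4 where "N4 = (4::nat) ^ (h - 1)"
  define H where "H = walks_edges N P"
  have NN4: "N = 4 * N4"
  proof -
    have "h = Suc (h - 1)" using h_range by simp
    then have "(4::nat) ^ h = 4 * 4 ^ (h - 1)" by (metis power_Suc)
    then show ?thesis unfolding N_def N4_def C_len .
  qed
  have D1: "1 \<le> D" unfolding D_def by simp
  have K4: "4 \<le> K" unfolding K_def using assms(3) power_increasing[of 1 k "4::nat"] by simp
  have N4K: "3 * K + 3 \<le> N4"
  proof -
    have "real N / 3 - 1 - real K \<ge> real N4"
      using h_cond unfolding N_def C_len K_def N4_def by simp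
    then have "real (4 * N4) / 3 - 1 - real K \<ge> real N4" using NN4 by simp
    then show ?thesis by linarith
  qed
  have Hdef: "H = we {..<N} P" unfolding H_def by (simp add: walks_edges_we)
  have cyc: "cycle_in (laakso n) cs" using C_iso by (simp add: isometric_cycle_def)
  have cL: "\<And>i. i < N \<Longrightarrow> cs ! i \<in> verts (laakso n)"
  proof -
    fix i assume "i < N"
    then have "adj (laakso n) (cs ! i) (cs ! ((i + 1) mod length cs))"
      using cyc unfolding cycle_in_def N_def by blast
    then show "cs ! i \<in> verts (laakso n)" unfolding adj_def verts_def Field_def by blast
  qed
  have iso: "\<And>i j. i < N \<Longrightarrow> j < N \<Longrightarrow> gdist (laakso n) (cs ! i) (cs ! j) = cyc_dist N i j"
    using C_iso unfolding isometric_cycle_def N_def by blast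
  have low: "\<And>i j t. i < N \<Longrightarrow> j < N \<Longrightarrow> dw (diamond m) (F (cs ! i)) (F (cs ! j)) t \<Longrightarrow>
      D * cyc_dist N i j \<le> t"
  proof -
    fix i j t assume a: "i < N" "j < N" "dw (diamond m) (F (cs ! i)) (F (cs ! j)) t"
    have "D * cyc_dist N i j \<le> gdist (diamond m) (F (cs ! i)) (F (cs ! j))"
      using F_lower cL[OF a(1)] cL[OF a(2)] iso[OF a(1,2)] unfolding D_def by metis
    also have "\<dots> \<le> t" by (rule dw_gdist[OF a(3)])
    finally show "D * cyc_dist N i j \<le> t" .
  qed
  have N12: "12 \<le> N" using NN4 N4K K4 by linarith
  have cd1: "\<And>i. i < N \<Longrightarrow> cyc_dist N i ((i + 1) mod N) = 1"
  proof -
    fix i assume i: "i < N"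
    show "cyc_dist N i ((i + 1) mod N) = 1"
    proof (cases "i + 1 < N")
      case True then show ?thesis using N12 by (simp add: cd_formula)
    next
      case False then have "i + 1 = N" using i by simp
      then show ?thesis using N12 by (simp add: cd_formula)
    qed
  qed
  have Pw: "\<And>i. i < N \<Longrightarrow> walk (diamond m) (P i)" using P_paths N_def by blast
  have Phd: "\<And>i. i < N \<Longrightarrow> hd (P i) = F (cs ! i)" using P_paths N_def by blast
  have Plast: "\<And>i. i < N \<Longrightarrow> last (P i) = F (cs ! ((i + 1) mod N))" using P_paths N_def by blast
  have lenP: "\<And>i. i < N \<Longrightarrow> length (P i) \<le> K * D + 1 \<and> 2 \<le> length (P i)"
  proof -
    fix i assume i: "i < N"
    have j: "(i + 1) mod N < N" using N12 by simp
    have l: "length (P i) = Suc (gdist (diamond m) (F (cs ! i)) (F (cs ! ((i + 1) mod N))))"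
      using P_paths i N_def by blast
    have "gdist (diamond m) (F (cs ! i)) (F (cs ! ((i + 1) mod N))) \<le> K * D * 1"
      using F_upper cL[OF i] cL[OF j] iso[OF i j] cd1[OF i] unfolding K_def D_def by metis
    moreover have "D * 1 \<le> gdist (diamond m) (F (cs ! i)) (F (cs ! ((i + 1) mod N)))"
      using F_lower cL[OF i] cL[OF j] iso[OF i j] cd1[OF i] unfolding D_def by metis
    ultimately show "length (P i) \<le> K * D + 1 \<and> 2 \<le> length (P i)" using l D1 by simp
  qed
  have adjH: "\<And>I x y. I \<subseteq> {..<N} \<Longrightarrow> adj (we I P) x y \<Longrightarrow> adj (diamond m) x y"
  proof -
    fix I x y assume I: "I \<subseteq> {..<N}" and "adj (we I P) x y"
    then obtain i j where ij: "i \<in> I" "Suc j < length (P i)"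
      "(x = P i ! j \<and> y = P i ! Suc j) \<or> (y = P i ! j \<and> x = P i ! Suc j)"
      unfolding adj_def we_def by blast
    have "adj (diamond m) (P i ! j) (P i ! Suc j)" using Pw[of i] I ij unfolding walk_def by blast
    then show "adj (diamond m) x y" using ij adj_sym by metis
  qed
  have toDm: "\<And>I x y t. I \<subseteq> {..<N} \<Longrightarrow> dw (we I P) x y t \<Longrightarrow> dw (diamond m) x y t"
    using adjH dw_adj_mono by metis
  have PwI: "\<And>I i. i \<in> I \<Longrightarrow> i < N \<Longrightarrow> walk (we I P) (P i)"
    using lenP walk_P_we by (metis list.size(3) not_numeral_le_zero)
  have dwP: "\<And>I i v. i < N \<Longrightarrow> i \<in> I \<Longrightarrow> v \<in> set (P i) \<Longrightarrow>
      dw (we I P) (F (cs ! i)) v (K * D) \<and> dw (we I P) v (F (cs ! ((i + 1) mod N))) (K * D)"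
  proof -
    fix I i v assume a: "i < N" "i \<in> I" "v \<in> set (P i)"
    obtain x where x: "x < length (P i)" "P i ! x = v" using a(3) by (auto simp: in_set_conv_nth)
    have w: "walk (we I P) (P i)" using PwI a by blast
    have l: "length (P i) \<le> K * D + 1" "2 \<le> length (P i)" using lenP a by auto
    have ne: "P i \<noteq> []" using l by auto
    have "dw (we I P) (P i ! 0) (P i ! x) (x - 0)" using dw_seg[OF w, of 0 x] x by simp
    moreover have "P i ! 0 = F (cs ! i)" using Phd[OF a(1)] ne by (simp add: hd_conv_nth)
    ultimately have 1: "dw (we I P) (F (cs ! i)) v (K * D)" using x l by (auto intro: dw_mono)
    have "dw (we I P) (P i ! x) (P i ! (length (P i) - 1)) (length (P i) - 1 - x)"
      using dw_seg[OF w, of x "length (P i) - 1"] x by simp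
    moreover have "P i ! (length (P i) - 1) = F (cs ! ((i + 1) mod N))"
      using Plast[OF a(1)] ne by (simp add: last_conv_nth)
    ultimately have 2: "dw (we I P) v (F (cs ! ((i + 1) mod N))) (K * D)" using x l by (auto intro: dw_mono)
    show "dw (we I P) (F (cs ! i)) v (K * D) \<and> dw (we I P) v (F (cs ! ((i + 1) mod N))) (K * D)"
      using 1 2 by blast
  qed
  define a where "a = N - 2 * K - 1"
  define M where "M = 2 * N4 - 2 * K - 1"
  define Ea where "Ea = we {..<a} P"
  define Eb where "Eb = we {a..<N} P"
  define R where "R = (\<Union>v\<in>{a..<N}. set (P v))"
  have aN: "a < N" "N - a = 2 * K + 1" unfolding a_def using NN4 N4K by auto
  have KM: "K < M" "M + K \<le> a" unfolding M_def a_def using NN4 N4K by auto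
  have reachA: "\<And>i. i \<le> a \<Longrightarrow> dw Ea (F (cs ! 0)) (F (cs ! i)) (i * (K * D))"
  proof -
    fix i assume "i \<le> a"
    then show "dw Ea (F (cs ! 0)) (F (cs ! i)) (i * (K * D))"
    proof (induction i)
      case 0 show ?case using dw_refl by simp
    next
      case (Suc i)
      then have t: "dw Ea (F (cs ! 0)) (F (cs ! i)) (i * (K * D))" by auto
      have "i < N" "i \<in> {..<a}" "(i + 1) mod N = Suc i" using Suc.prems aN by auto
      then have "dw Ea (F (cs ! i)) (F (cs ! Suc i)) (K * D)"
      proof -
        have "P i \<noteq> []" using lenP[of i] \<open>i < N\<close> by auto
        then have "last (P i) \<in> set (P i)" by simp
        then show ?thesis using dwP[of i "{..<a}" "last (P i)"] Plast[of i] \<open>i < N\<close>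
          \<open>i \<in> {..<a}\<close> \<open>(i + 1) mod N = Suc i\<close> unfolding Ea_def by simp
      qed
      then show ?case using dw_trans[OF t] by (simp add: add.commute)
    qed
  qed
  obtain Q where Qw: "walk Ea Q" and Qh: "hd Q = F (cs ! 0)" and Ql: "last Q = F (cs ! a)"
    and Qd: "distinct Q"
  proof -
    have "dw Ea (F (cs ! 0)) (F (cs ! a)) (a * (K * D))" using reachA by blast
    then obtain xs where "walk Ea xs" "hd xs = F (cs ! 0)" "last xs = F (cs ! a)"
      unfolding dw_def by blast
    then obtain ys where "walk Ea ys" "hd ys = F (cs ! 0)" "last ys = F (cs ! a)"
      "length ys = Suc (gdist Ea (hd ys) (last ys))"
      using shortest_ex by metis
    then show ?thesis using that shortest_distinct by blast
  qed
  have EaH: "{..<a} \<subseteq> {..<N}" using aN by auto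
  have EbH: "{a..<N} \<subseteq> {..<N}" by auto
  have QDm: "walk (diamond m) Q" using walk_adj_mono[OF adjH[OF EaH]] Qw unfolding Ea_def by blast
  have QH: "walk H Q" using walk_mono[OF we_mono[OF EaH]] Qw unfolding Ea_def Hdef by blast
  have Q0: "Q \<noteq> []" using Qw by (simp add: walk_def)
  have Qlen: "2 \<le> length Q"
  proof (rule ccontr)
    assume "\<not> 2 \<le> length Q"
    moreover have "0 < length Q" using Q0 by simp
    ultimately have "length Q = 1" by linarith
    then obtain x where "Q = [x]" by (auto simp: length_Suc_conv)
    then have eq: "F (cs ! 0) = F (cs ! a)" using Qh Ql by simp
    have "dw (diamond m) (F (cs ! 0)) (F (cs ! a)) 0" using dw_refl[of "diamond m" "F (cs ! 0)"] eq by simp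
    then have "D * cyc_dist N 0 a \<le> 0" using low[of 0 a 0] aN by simp
    moreover have "cyc_dist N 0 a = min a (N - a)" by (simp add: cd_formula)
    moreover have "0 < a" using KM by simp
    ultimately show False using D1 aN by simp
  qed
  have Qset: "set Q \<subseteq> (\<Union>i\<in>{..<a}. set (P i))"
  proof -
    have "set Q \<subseteq> Field (we {..<a} P)" using walk_set_Field[OF Qw Qlen] unfolding Ea_def .
    then show ?thesis using Field_we by (rule order_trans)
  qed
  define u where "u = (\<lambda>t. SOME i. i < a \<and> Q ! t \<in> set (P i))"
  have uP: "\<And>t. t < length Q \<Longrightarrow> u t < a \<and> Q ! t \<in> set (P (u t))"
  proof -
    fix t assume "t < length Q"
    then have "Q ! t \<in> set Q" by simp
    then have "\<exists>i. i < a \<and> Q ! t \<in> set (P i)" using Qset by auto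
    then show "u t < a \<and> Q ! t \<in> set (P (u t))" unfolding u_def by (rule someI_ex)
  qed
  have near: "\<And>t. t < length Q \<Longrightarrow> dw (diamond m) (F (cs ! u t)) (Q ! t) (K * D)"
  proof -
    fix t assume t: "t < length Q"
    have "u t < N" using uP[OF t] aN by simp
    then show "dw (diamond m) (F (cs ! u t)) (Q ! t) (K * D)"
      using dwP[of "u t" "{..<N}" "Q ! t"] uP[OF t] toDm[of "{..<N}"] by blast
  qed
  have step: "\<And>t. Suc t < length Q \<Longrightarrow> u (Suc t) \<le> u t + 2 * K + 1"
  proof -
    fix t assume t: "Suc t < length Q"
    have "dw (diamond m) (F (cs ! u t)) (F (cs ! u (Suc t))) (K * D + (Suc t - t) + K * D)"
      using dw_trans[OF dw_trans[OF near dw_seg[OF QDm, of t "Suc t"]] dw_sym[OF near[of "Suc t"]]] t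
      by simp
    moreover have "u t < N" "u (Suc t) < N" using uP[of t] uP[of "Suc t"] t aN by auto
    ultimately have "D * cyc_dist N (u t) (u (Suc t)) \<le> K * D + (Suc t - t) + K * D"
      using low by blast
    then have "D * cyc_dist N (u t) (u (Suc t)) \<le> D * (2 * K) + 1"
      by (simp add: algebra_simps)
    then have c: "cyc_dist N (u t) (u (Suc t)) \<le> 2 * K + 1" using nat_mult_le_plus1 D1 by blast
    show "u (Suc t) \<le> u t + 2 * K + 1"
    proof (rule ccontr)
      assume "\<not> ?thesis"
      then show False using c uP[of t] uP[of "Suc t"] t aN by (auto simp: cd_formula min_def split: if_splits)
    qed
  qed
  have u0: "u 0 \<le> K"
  proof -
    have "dw (diamond m) (F (cs ! u 0)) (F (cs ! 0)) (K * D)" using near[of 0] Qh Q0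
      by (simp add: hd_conv_nth)
    moreover have "u 0 < N" "0 < N" using uP[of 0] Q0 aN by auto
    ultimately have "D * cyc_dist N (u 0) 0 \<le> K * D" using low by blast
    then have "D * cyc_dist N (u 0) 0 \<le> D * K" by (simp add: mult.commute)
    then have "cyc_dist N (u 0) 0 \<le> K" using D1 by simp
    then show ?thesis using uP[of 0] Q0 aN by (auto simp: cd_formula min_def split: if_splits)
  qed
  define lq where "lq = length Q - 1"
  have lq: "lq < length Q" "Q ! lq = F (cs ! a)" using Q0 Ql unfolding lq_def by (auto simp: last_conv_nth)
  have ulast: "a \<le> u lq + K"
  proof -
    have "dw (diamond m) (F (cs ! u lq)) (F (cs ! a)) (K * D)" using near[of lq] lq by simp
    moreover have "u lq < N" "a < N" using uP[of lq] lq aN by auto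
    ultimately have "D * cyc_dist N (u lq) a \<le> K * D" using low by blast
    then have "D * cyc_dist N (u lq) a \<le> D * K" by (simp add: mult.commute)
    then have "cyc_dist N (u lq) a \<le> K" using D1 by simp
    then show ?thesis using uP[of lq] lq aN by (auto simp: cd_formula min_def split: if_splits)
  qed
  define t0 where "t0 = (LEAST t. t < length Q \<and> M \<le> u t)"
  have t0ex: "lq < length Q \<and> M \<le> u lq" using lq ulast KM by simp
  have t0P: "t0 < length Q" "M \<le> u t0" using LeastI[of "\<lambda>t. t < length Q \<and> M \<le> u t", OF t0ex]
    unfolding t0_def by auto
  have t0pos: "t0 \<noteq> 0"
  proof
    assume "t0 = 0"
    then have "M \<le> u 0" using t0P by simp
    then show False using u0 KM by simp
  qed
  have t0b: "u t0 \<le> M + 2 * K"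
  proof -
    have "\<not> (t0 - 1 < length Q \<and> M \<le> u (t0 - 1))"
      using not_less_Least[of "t0 - 1" "\<lambda>t. t < length Q \<and> M \<le> u t"] t0pos unfolding t0_def by simp
    moreover have "t0 - 1 < length Q" using t0P by simp
    ultimately have "u (t0 - 1) < M" by simp
    moreover have "u t0 \<le> u (t0 - 1) + 2 * K + 1" using step[of "t0 - 1"] t0pos t0P by simp
    ultimately show ?thesis by simp
  qed
  have Pne: "\<And>i. i < N \<Longrightarrow> P i \<noteq> []"
  proof -
    fix i assume "i < N"
    then have "2 \<le> length (P i)" using lenP by blast
    then show "P i \<noteq> []" by auto
  qed
  have R0: "F (cs ! 0) \<in> R"
  proof -
    have m: "N - 1 \<in> {a..<N}" using aN by auto
    have n: "N - 1 < N" "(N - 1 + 1) mod N = 0" using N12 by auto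
    have l: "last (P (N - 1)) = F (cs ! 0)" using Plast[OF n(1)] n(2) by simp
    have "last (P (N - 1)) \<in> set (P (N - 1))" using Pne[OF n(1)] by (rule last_in_set)
    then have "F (cs ! 0) \<in> set (P (N - 1))" using l by simp
    then show ?thesis unfolding R_def using m by (rule UN_I[rotated])
  qed
  have Ra: "F (cs ! a) \<in> R"
  proof -
    have m: "a \<in> {a..<N}" using aN by auto
    have "hd (P a) \<in> set (P a)" using Pne[OF aN(1)] by (rule hd_in_set)
    then have "F (cs ! a) \<in> set (P a)" using Phd[OF aN(1)] by simp
    then show ?thesis unfolding R_def using m by (rule UN_I[rotated])
  qed
  define G where "G = 2 * N4 - 2 * K"
  have far: "\<And>s. s < length Q \<Longrightarrow> Q ! s \<in> R \<Longrightarrow>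
     D * G \<le> 2 * (K * D) + (if s \<le> t0 then t0 - s else s - t0)"
  proof -
    fix s assume s: "s < length Q" "Q ! s \<in> R"
    obtain v where v: "a \<le> v" "v < N" "Q ! s \<in> set (P v)" using s(2) unfolding R_def by auto
    have dv: "dw (diamond m) (F (cs ! v)) (Q ! s) (K * D)"
      using dwP[of v "{..<N}" "Q ! s"] toDm[of "{..<N}"] v by blast
    have seg: "dw (diamond m) (Q ! t0) (Q ! s) (if s \<le> t0 then t0 - s else s - t0)"
    proof (cases "s \<le> t0")
      case True then show ?thesis using dw_sym[OF dw_seg[OF QDm True t0P(1)]] by simp
    next
      case False then show ?thesis using dw_seg[OF QDm _ s(1), of t0] by simp
    qed
    have "dw (diamond m) (F (cs ! u t0)) (F (cs ! v)) (K * D + (if s \<le> t0 then t0 - s else s - t0) + K * D)"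
      by (rule dw_trans[OF dw_trans[OF near[OF t0P(1)] seg] dw_sym[OF dv]])
    moreover have "u t0 < N" using uP[OF t0P(1)] aN by simp
    ultimately have 1: "D * cyc_dist N (u t0) v \<le> K * D + (if s \<le> t0 then t0 - s else s - t0) + K * D"
      using low v by blast
    have "G \<le> cyc_dist N (u t0) v"
    proof -
      have b: "u t0 < v" "v - u t0 \<ge> G" "N - (v - u t0) \<ge> G"
        using t0b v aN KM t0P unfolding G_def M_def a_def using NN4 N4K by linarith+
      then show ?thesis by (simp add: cd_formula)
    qed
    then have "D * G \<le> D * cyc_dist N (u t0) v" by (rule mult_le_mono2)
    then show "D * G \<le> 2 * (K * D) + (if s \<le> t0 then t0 - s else s - t0)" using 1 by linarith
  qed
  have GK: "D * (2 * K) + D \<le> D * G"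
  proof -
    have "2 * K + 1 \<le> G" unfolding G_def using N4K by simp
    then have "D * (2 * K + 1) \<le> D * G" by (rule mult_le_mono2)
    then show ?thesis by (simp add: algebra_simps)
  qed
  define S1 where "S1 = {s. s \<le> t0 \<and> Q ! s \<in> R}"
  define i0 where "i0 = Max S1"
  have S1f: "finite S1" "0 \<in> S1" unfolding S1_def using R0 Qh Q0 by (auto simp: hd_conv_nth)
  have "S1 \<noteq> {}" using S1f(2) by blast
  then have "i0 \<in> S1" using Max_in[OF S1f(1)] unfolding i0_def by blast
  then have i0P: "i0 \<le> t0" "Q ! i0 \<in> R" unfolding S1_def by auto
  have i0M: "\<And>s. i0 < s \<Longrightarrow> s \<le> t0 \<Longrightarrow> Q ! s \<notin> R"
  proof
    fix s assume s: "i0 < s" "s \<le> t0" "Q ! s \<in> R"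
    then have "s \<in> S1" unfolding S1_def by simp
    then have "s \<le> i0" using Max_ge[OF S1f(1)] unfolding i0_def by simp
    then show False using s by simp
  qed
  define S2 where "S2 = {s. t0 \<le> s \<and> s < length Q \<and> Q ! s \<in> R}"
  define j0 where "j0 = Min S2"
  have "t0 \<le> lq" using t0P unfolding lq_def by simp
  then have S2f: "finite S2" "lq \<in> S2" unfolding S2_def using Ra lq t0P by auto
  have "S2 \<noteq> {}" using S2f(2) by blast
  then have "j0 \<in> S2" using Min_in[OF S2f(1)] unfolding j0_def by blast
  then have j0P: "t0 \<le> j0" "j0 < length Q" "Q ! j0 \<in> R" unfolding S2_def by auto
  have j0M: "\<And>s. t0 \<le> s \<Longrightarrow> s < j0 \<Longrightarrow> Q ! s \<notin> R"
  proof
    fix s assume "t0 \<le> s" "s < j0" "Q ! s \<in> R"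
    moreover then have "s < length Q" using j0P by simp
    ultimately have "s \<in> S2" unfolding S2_def by simp
    then have "j0 \<le> s" using Min_le[OF S2f(1)] unfolding j0_def by simp
    then show False using \<open>s < j0\<close> by simp
  qed
  have gi: "D * G \<le> 2 * (K * D) + (t0 - i0)" using far[of i0] i0P j0P t0P by simp
  have gj: "D * G \<le> 2 * (K * D) + (j0 - t0)"
  proof (cases "j0 = t0")
    case True then show ?thesis using far[of j0] j0P by simp
  next
    case False then show ?thesis using far[of j0] j0P by simp
  qed
  have it: "i0 < t0"
  proof -
    have "D * (2 * K) = 2 * (K * D)" by simp
    then have "1 \<le> t0 - i0" using gi GK D1 by linarith
    then show ?thesis by simp
  qed
  have tj: "t0 < j0"
  proof -
    have "D * (2 * K) = 2 * (K * D)" by simp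
    then have "1 \<le> j0 - t0" using gj GK D1 by linarith
    then show ?thesis by simp
  qed
  have lenA: "D * N4 \<le> Suc (j0 - i0)"
  proof -
    have "N4 + 4 * K \<le> 2 * G" unfolding G_def using N4K by simp
    then have "D * (N4 + 4 * K) \<le> D * (2 * G)" by (rule mult_le_mono2)
    then have "D * N4 + 4 * (K * D) \<le> 2 * (D * G)" by (simp add: algebra_simps)
    moreover have "j0 - i0 = (j0 - t0) + (t0 - i0)" using it tj by simp
    ultimately show ?thesis using gi gj by linarith
  qed
  define A where "A = take (Suc (j0 - i0)) (drop i0 Q)"
  have ij: "i0 \<le> j0" using it tj by simp
  have Aw: "walk H A" "hd A = Q ! i0" "last A = Q ! j0" "length A = Suc (j0 - i0)"
    using walk_seg[OF QH ij j0P(2)] unfolding A_def by auto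
  have Ad: "distinct A" unfolding A_def using Qd by simp
  have Anth: "\<And>r. r < length A \<Longrightarrow> A ! r = Q ! (i0 + r)"
    unfolding A_def using j0P(2) ij by (simp add: nth_drop)
  have reachB: "\<And>d. a + d < N \<Longrightarrow> dw Eb (F (cs ! a)) (F (cs ! (a + d))) (d * (K * D))"
  proof -
    fix d assume "a + d < N"
    then show "dw Eb (F (cs ! a)) (F (cs ! (a + d))) (d * (K * D))"
    proof (induction d)
      case 0 show ?case using dw_refl by simp
    next
      case (Suc d)
      then have t: "dw Eb (F (cs ! a)) (F (cs ! (a + d))) (d * (K * D))" by auto
      have i: "a + d < N" "a + d \<in> {a..<N}" "(a + d + 1) mod N = a + Suc d" using Suc.prems by auto
      have "last (P (a + d)) \<in> set (P (a + d))" using Pne[OF i(1)] by (rule last_in_set)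
      then have "dw Eb (F (cs ! (a + d))) (F (cs ! (a + Suc d))) (K * D)"
        using dwP[of "a + d" "{a..<N}" "last (P (a + d))"] i Plast[OF i(1)] unfolding Eb_def by simp
      then show ?case using dw_trans[OF t] by (simp add: add.commute)
    qed
  qed
  have RB: "\<And>x. x \<in> R \<Longrightarrow> dw Eb (F (cs ! a)) x (N * (K * D))"
  proof -
    fix x assume "x \<in> R"
    then obtain v where v: "a \<le> v" "v < N" "x \<in> set (P v)" unfolding R_def by auto
    have 1: "dw Eb (F (cs ! a)) (F (cs ! v)) ((v - a) * (K * D))" using reachB[of "v - a"] v by simp
    have 2: "dw Eb (F (cs ! v)) x (K * D)" using dwP[of v "{a..<N}" x] v unfolding Eb_def by simp
    have "(v - a) * (K * D) + K * D = Suc (v - a) * (K * D)" by simp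
    also have "\<dots> \<le> N * (K * D)" using v by (intro mult_le_mono1) simp
    finally have bd: "(v - a) * (K * D) + K * D \<le> N * (K * D)" .
    show "dw Eb (F (cs ! a)) x (N * (K * D))" by (rule dw_mono[OF dw_trans[OF 1 2] bd])
  qed
  obtain S where Sw: "walk Eb S" and Sh: "hd S = Q ! j0" and Sl: "last S = Q ! i0" and Sd: "distinct S"
  proof -
    have "dw Eb (Q ! j0) (Q ! i0) (N * (K * D) + N * (K * D))"
      using dw_trans[OF dw_sym[OF RB[OF j0P(3)]] RB[OF i0P(2)]] .
    then obtain xs where "walk Eb xs" "hd xs = Q ! j0" "last xs = Q ! i0"
      unfolding dw_def by blast
    then obtain ys where "walk Eb ys" "hd ys = Q ! j0" "last ys = Q ! i0"
      "length ys = Suc (gdist Eb (hd ys) (last ys))"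
      using shortest_ex by metis
    then show ?thesis using that shortest_distinct by blast
  qed
  have i0l: "i0 < length Q" using ij j0P(2) by simp
  have neq: "Q ! j0 \<noteq> Q ! i0"
  proof
    assume "Q ! j0 = Q ! i0"
    then have "j0 = i0" using nth_eq_iff_index_eq[OF Qd j0P(2) i0l] by simp
    then show False using it tj by simp
  qed
  have S0: "S \<noteq> []" using Sw by (simp add: walk_def)
  have Slen: "2 \<le> length S"
  proof (rule ccontr)
    assume "\<not> 2 \<le> length S"
    moreover have "0 < length S" using S0 by simp
    ultimately have "length S = 1" by linarith
    then obtain x where "S = [x]" by (auto simp: length_Suc_conv)
    then show False using Sh Sl neq by simp
  qed
  have SR: "set S \<subseteq> R"
  proof -
    have "set S \<subseteq> Field (we {a..<N} P)" using walk_set_Field[OF Sw Slen] unfolding Eb_def .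
    then show ?thesis using Field_we unfolding R_def by (rule order_trans)
  qed
  have SH: "walk H S" using walk_mono[OF we_mono[OF EbH]] Sw unfolding Eb_def Hdef by blast
  have disj: "\<forall>x \<in> set A. x \<in> set S \<longrightarrow> x = hd A \<or> x = last A"
  proof (intro ballI impI)
    fix x assume x: "x \<in> set A" "x \<in> set S"
    then obtain r where r: "r < length A" "A ! r = x" by (auto simp: in_set_conv_nth)
    have xr: "Q ! (i0 + r) \<in> R" using Anth[OF r(1)] r(2) x(2) SR by auto
    have "r = 0 \<or> r = j0 - i0"
    proof (rule ccontr)
      assume "\<not> (r = 0 \<or> r = j0 - i0)"
      then have rr: "i0 < i0 + r" "i0 + r < j0" using r(1) Aw(4) by auto
      show False
      proof (cases "i0 + r \<le> t0")
        case True then show False using i0M[OF rr(1) True] xr by simp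
      next
        case False then show False using j0M[of "i0 + r"] rr(2) xr by simp
      qed
    qed
    then show "x = hd A \<or> x = last A"
    proof
      assume "r = 0" then show ?thesis using r Anth Aw(2) by simp
    next
      assume "r = j0 - i0" then show ?thesis using r Anth Aw(3) ij by simp
    qed
  qed
  have A3: "3 \<le> length A" using Aw(4) it tj by simp
  have cyc: "cycle_in H (A @ butlast (tl S))"
    by (rule join_cycle[OF Aw(1) SH Ad Sd A3 Slen _ _ disj]) (simp_all add: Aw Sh Sl)
  define ys where "ys = A @ butlast (tl S)"
  have ysd: "distinct ys" using cyc unfolding ys_def cycle_in_def by simp
  have lower: "4 ^ (p + h - 1) \<le> length ys"
  proof -
    have "(4::nat) ^ (p + h - 1) = D * N4" unfolding D_def N4_def using h_range
      by (simp add: power_add[symmetric])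
    then show ?thesis using lenA Aw(4) unfolding ys_def by simp
  qed
  have PS: "(\<Union>i\<in>{..<N}. set (P i)) \<subseteq> (\<Union>i\<in>{..<N}. set (tl (P i)))"
  proof
    fix x assume "x \<in> (\<Union>i\<in>{..<N}. set (P i))"
    then obtain i where i: "i < N" "x \<in> set (P i)" by auto
    have Pi: "P i = hd (P i) # tl (P i)" using Pne[OF i(1)] by simp
    show "x \<in> (\<Union>i\<in>{..<N}. set (tl (P i)))"
    proof (cases "x \<in> set (tl (P i))")
      case True then show ?thesis using i by auto
    next
      case False
      have "x \<in> set (hd (P i) # tl (P i))" using i(2) Pi by simp
      then have xh: "x = F (cs ! i)" using False Phd[OF i(1)] by simp
      define i' where "i' = (if i = 0 then N - 1 else i - 1)"
      have i': "i' < N" "(i' + 1) mod N = i" unfolding i'_def using i N12 by auto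
      have "2 \<le> length (P i')" using lenP[OF i'(1)] by simp
      then have "tl (P i') \<noteq> []" by (cases "P i'") auto
      then have "last (tl (P i')) \<in> set (tl (P i'))" by (rule last_in_set)
      moreover have "last (tl (P i')) = last (P i')" using \<open>tl (P i') \<noteq> []\<close> by (simp add: last_tl)
      ultimately have "x \<in> set (tl (P i'))" using Plast[OF i'(1)] i'(2) xh by simp
      then show ?thesis using i'(1) by auto
    qed
  qed
  have upper: "length ys \<le> 4 ^ (p + h + k)"
  proof -
    have s1: "set A \<subseteq> set Q" unfolding A_def by (rule order_trans[OF set_take_subset set_drop_subset])
    have s2: "set (butlast (tl S)) \<subseteq> set S"
    proof
      fix x assume "x \<in> set (butlast (tl S))"
      then have "x \<in> set (tl S)" by (rule in_set_butlastD)
      then show "x \<in> set S" by (rule list.set_sel(2)[rotated]) (rule S0)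
    qed
    have "set ys \<subseteq> set Q \<union> set S" unfolding ys_def set_append using s1 s2 by (rule Un_mono)
    also have "\<dots> \<subseteq> (\<Union>i\<in>{..<N}. set (P i))"
    proof -
      have "(\<Union>i\<in>{..<a}. set (P i)) \<subseteq> (\<Union>i\<in>{..<N}. set (P i))"
      proof
        fix x assume "x \<in> (\<Union>i\<in>{..<a}. set (P i))"
        then obtain i where "i < a" "x \<in> set (P i)" by blast
        moreover then have "i \<in> {..<N}" using aN by simp
        ultimately show "x \<in> (\<Union>i\<in>{..<N}. set (P i))" by blast
      qed
      moreover have "R \<subseteq> (\<Union>i\<in>{..<N}. set (P i))"
      proof
        fix x assume "x \<in> R"
        then obtain i where "i \<in> {a..<N}" "x \<in> set (P i)" unfolding R_def by blast
        moreover then have "i \<in> {..<N}" by simp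
        ultimately show "x \<in> (\<Union>i\<in>{..<N}. set (P i))" by blast
      qed
      ultimately have "set Q \<subseteq> (\<Union>i\<in>{..<N}. set (P i))" "set S \<subseteq> (\<Union>i\<in>{..<N}. set (P i))"
        using order_trans[OF Qset] order_trans[OF SR] by auto
      then show ?thesis by (rule Un_least)
    qed
    also have "\<dots> \<subseteq> (\<Union>i\<in>{..<N}. set (tl (P i)))" by (rule PS)
    finally have sub: "set ys \<subseteq> (\<Union>i\<in>{..<N}. set (tl (P i)))" .
    have "length ys = card (set ys)" using distinct_card[OF ysd] by simp
    also have "\<dots> \<le> card (\<Union>i\<in>{..<N}. set (tl (P i)))" by (rule card_mono[OF _ sub]) simp
    also have "\<dots> \<le> (\<Sum>i\<in>{..<N}. card (set (tl (P i))))" by (rule card_UN_le) simp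
    also have "\<dots> \<le> (\<Sum>i\<in>{..<N}. K * D)"
    proof (rule sum_mono)
      fix i assume "i \<in> {..<N}"
      then have "length (P i) \<le> K * D + 1" using lenP by simp
      then show "card (set (tl (P i))) \<le> K * D" using card_length[of "tl (P i)"] by simp
    qed
    also have "\<dots> = N * (K * D)" by simp
    also have "\<dots> = 4 ^ (p + h + k)"
    proof -
      have "(4::nat) ^ (p + h + k) = 4 ^ p * 4 ^ h * 4 ^ k" by (simp only: power_add)
      then show ?thesis unfolding N_def C_len K_def D_def by (simp only: mult_ac)
    qed
    finally show ?thesis .
  qed
  show ?thesis using cyc lower upper unfolding ys_def H_def N_def by blast


qed

end
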